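(* Let $f\in\mathrm{Dom}_+(\Gamma)$. Suppose that (i) $f\to\infty$; (ii) there is an increasing (not necessarily strictly) function $g:[0,\infty)\to[0,\infty)$ such that $G(z):=\int_0^z\frac{dy}{g(y)}<\infty$ for all $z\ge0$ and $\lim_{z\to\infty}G(z)=\infty$; (iii) $\Gamma f(x)\le g(f(x))$ for all $x\in\mathbb X$. Then $\mathbb P_x(\zeta=+\infty)=1$ for all $x\in\mathbb X$.
   Context: Let $\mathbb X$ be a countably infinite set and $\Gamma=(\Gamma_{xy})_{x,y\in\mathbb X}$ a matrix with $\Gamma_{xy}\ge0$ for $y\ne x$, $\gamma_x:=\sum_{y\ne x}\Gamma_{xy}$, $\Gamma_{xx}=-\gamma_x$, and $0<\gamma_x<\infty$ for all $x$. Let $P_{xy}=\Gamma_{xy}/\gamma_x$ for $y\neq x$ and $P_{xx}=0$; the discrete-time chain $(\tilde\xi_n)$ with transition matrix $P$ (embedded jump chain) is assumed irreducible. The continuous-time Markov chain $(\xi_t)_{t\ge0}$ with generator $\Gamma$: conditionally on $\tilde\xi$, holding times $\sigma_n$ ($n\ge1$) are independent exponential with parameter $\gamma_{\tilde\xi_{n-1}}$; $J_0=0$, $J_n=\sigma_1+\dots+\sigma_n$; explosion time $\zeta=\lim_n J_n$; $\xi_t=\tilde\xi_n$ on $[J_n,J_{n+1})$ and $\xi_t=\partial$ (cemetery) for $t\ge\zeta$. $\mathbb P_x$ refers to $\xi_0=x$. $\mathrm{Dom}(\Gamma)=\{f:\mathbb X\to\mathbb R:\ \sum_{y\ne x}\Gamma_{xy}|f(y)|<\infty\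 \forall x\}$, $\mathrm{Dom}_+(\Gamma)$ its non-negative elements, $\Gamma f(x)=\sum_{y}\Gamma_{xy}f(y)$. "$f\to\infty$" means $\{x: f(x)\le n\}$ is finite for every $n\in\mathbb N$. *)

theory Defs
  imports "HOL-Probability.Probability"
begin

definition total_rate :: "('a \<Rightarrow> 'a \<Rightarrow> real) \<Rightarrow> 'a \<Rightarrow> real" where
  "total_rate \<Gamma> x = infsum (\<lambda>y. \<Gamma> x y) (UNIV - {x})"

definition is_generator :: "('a \<Rightarrow> 'a \<Rightarrow> real) \<Rightarrow> bool" where
  "is_generator \<Gamma> \<longleftrightarrow>
     (\<forall>x y. x \<noteq> y \<longrightarrow> \<Gamma> x y \<ge> 0) \<and>
     (\<forall>x. (\<lambda>y. \<Gamma> x y) summable_on (UNIV - {x})) \<and>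
     (\<forall>x. 0 < total_rate \<Gamma> x) \<and>
     (\<forall>x. \<Gamma> x x = - total_rate \<Gamma> x)"

definition jump_matrix :: "('a \<Rightarrow> 'a \<Rightarrow> real) \<Rightarrow> 'a \<Rightarrow> 'a \<Rightarrow> real" where
  "jump_matrix \<Gamma> x y = (if x = y then 0 else \<Gamma> x y / total_rate \<Gamma> x)"

definition jump_irreducible :: "('a \<Rightarrow> 'a \<Rightarrow> real) \<Rightarrow> bool" where
  "jump_irreducible \<Gamma> \<longleftrightarrow>
     (\<forall>x y. (x, y) \<in> {(u, v). jump_matrix \<Gamma> u v > 0}\<^sup>*)"

definition in_Dom :: "('a \<Rightarrow> 'a \<Rightarrow> real) \<Rightarrow> ('a \<Rightarrow> real) \<Rightarrow> bool" where
  "in_Dom \<Gamma> f \<longleftrightarrow> (\<forall>x. (\<lambda>y. \<Gamma> x y * \<bar>f y\<bar>) summable_on (UNIV - {x}))"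

definition gen_apply :: "('a \<Rightarrow> 'a \<Rightarrow> real) \<Rightarrow> ('a \<Rightarrow> real) \<Rightarrow> 'a \<Rightarrow> real" where
  "gen_apply \<Gamma> f x = infsum (\<lambda>y. \<Gamma> x y * f y) UNIV"

definition tends_to_infinity :: "('a \<Rightarrow> real) \<Rightarrow> bool" where
  "tends_to_infinity f \<longleftrightarrow> (\<forall>n::nat. finite {x. f x \<le> real n})"

(* The continuous-time chain started at x, described on a probability space M
   by its embedded jump chain xi (xi n = \<tilde>\<xi>_n) and holding times sigma
   (sigma (Suc k) = \<sigma>_{k+1}, the holding time in state \<tilde>\<xi>_k). *)
definition ctmc_from :: "('a \<Rightarrow> 'a \<Rightarrow> real) \<Rightarrow> 'a \<Rightarrow> 'w measure
      \<Rightarrow> (nat \<Rightarrow> 'w \<Rightarrow> 'a) \<Rightarrow> (nat \<Rightarrow> 'w \<Rightarrow> real) \<Rightarrow> bool" where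
  "ctmc_from \<Gamma> x M \<xi> \<sigma> \<longleftrightarrow>
     prob_space M \<and>
     (\<forall>n. \<xi> n \<in> measurable M (count_space UNIV)) \<and>
     (\<forall>n. \<sigma> n \<in> borel_measurable M) \<and>
     (\<forall>(n::nat) (xs :: nat \<Rightarrow> 'a) (ts :: nat \<Rightarrow> real). (\<forall>k<n. 0 \<le> ts k) \<longrightarrow>
        measure M {\<omega> \<in> space M. (\<forall>k\<le>n. \<xi> k \<omega> = xs k) \<and> (\<forall>k<n. ts k < \<sigma> (Suc k) \<omega>)}
        = (if xs 0 = x then 1 else 0) *
          (\<Prod>k<n. jump_matrix \<Gamma> (xs k) (xs (Suc k)) * exp (- total_rate \<Gamma> (xs k) * ts k)))"

(* explosion time zeta = lim J_n = sum of all holding times (value \<infinity> allowed) *)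
definition explosion_time :: "(nat \<Rightarrow> 'w \<Rightarrow> real) \<Rightarrow> 'w \<Rightarrow> ennreal" where
  "explosion_time \<sigma> \<omega> = (\<Sum>n. ennreal (\<sigma> (Suc n) \<omega>))"

end

theory Submission
  imports Defs
begin

lemma nn_count_infsum:
  fixes g :: "'b \<Rightarrow> real"
  assumes "g summable_on A" "\<And>x. x\<in>A \<Longrightarrow> 0 \<le> g x"
  shows "(\<integral>\<^sup>+x. ennreal (g x) \<partial>count_space A) = ennreal (infsum g A)"
proof -
  have "Infinite_Set_Sum.abs_summable_on g A"
    using assms abs_summable_equivalent summable_on_iff_abs_summable_on_real by blast
  then have "nn_integral (count_space A) g = ennreal (infsetsum g A)"
    using assms nn_integral_conv_infsetsum by blast
  moreover have "infsetsum g A = infsum g A"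
    using \<open>Infinite_Set_Sum.abs_summable_on g A\<close> infsetsum_infsum abs_summable_equivalent by blast
  ultimately show ?thesis by simp
qed

lemma UNIV_insert_diff: "UNIV = insert x (UNIV - {x})" by auto

locale genl = fixes \<Gamma> :: "'a::countable \<Rightarrow> 'a \<Rightarrow> real" assumes gen: "is_generator \<Gamma>"
begin

lemma rate_pos: "0 < total_rate \<Gamma> x"
  using gen unfolding is_generator_def by blast

lemma jm_nonneg: "0 \<le> jump_matrix \<Gamma> x y"
  using gen rate_pos[of x] unfolding is_generator_def jump_matrix_def by (simp add: order_less_imp_le)

lemma jm_summable_diff: "(\<lambda>y. \<Gamma> x y * c) summable_on (UNIV - {x})"
  using gen unfolding is_generator_def by (auto intro: summable_on_cmult_left)

lemma jm_summable: "jump_matrix \<Gamma> x summable_on UNIV"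
proof -
  have "(\<lambda>y. \<Gamma> x y * (1 / total_rate \<Gamma> x)) summable_on (UNIV - {x})"
    by (rule jm_summable_diff)
  then have "jump_matrix \<Gamma> x summable_on (UNIV - {x})"
    by (rule summable_on_cong[THEN iffD1, rotated]) (auto simp: jump_matrix_def)
  then have "jump_matrix \<Gamma> x summable_on insert x (UNIV - {x})" by (simp only: summable_on_insert_iff)
  then show ?thesis by simp
qed

lemma jm_sum: "infsum (jump_matrix \<Gamma> x) UNIV = 1"
proof -
  have "infsum (jump_matrix \<Gamma> x) UNIV = infsum (jump_matrix \<Gamma> x) (UNIV - {x})"
    by (rule infsum_cong_neutral) (auto simp: jump_matrix_def)
  also have "\<dots> = infsum (\<lambda>y. \<Gamma> x y * (1 / total_rate \<Gamma> x)) (UNIV - {x})"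
    by (rule infsum_cong) (auto simp: jump_matrix_def)
  also have "\<dots> = infsum (\<lambda>y. \<Gamma> x y) (UNIV - {x}) * (1 / total_rate \<Gamma> x)"
    by (rule infsum_cmult_left) (use gen in \<open>auto simp: is_generator_def\<close>)
  also have "\<dots> = 1" using rate_pos[of x] by (simp add: total_rate_def)
  finally show ?thesis .
qed

definition K :: "'a \<Rightarrow> 'a pmf" where "K x = embed_pmf (jump_matrix \<Gamma> x)"

lemma jm_nn: "(\<integral>\<^sup>+y. ennreal (jump_matrix \<Gamma> x y) \<partial>count_space UNIV) = 1"
  using nn_count_infsum[OF jm_summable] jm_nonneg jm_sum by simp

lemma pmf_K: "pmf (K x) y = jump_matrix \<Gamma> x y"
  unfolding K_def by (rule pmf_embed_pmf) (use jm_nonneg jm_nn in auto)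

lemma K_integral:
  fixes g :: "'a \<Rightarrow> real"
  assumes "\<And>y. 0 \<le> g y" "(\<lambda>y. jump_matrix \<Gamma> x y * g y) summable_on UNIV"
  shows "integrable (K x) g" "integral\<^sup>L (K x) g = infsum (\<lambda>y. jump_matrix \<Gamma> x y * g y) UNIV"
proof -
  have nn: "(\<integral>\<^sup>+y. ennreal (g y) \<partial>K x) = ennreal (infsum (\<lambda>y. jump_matrix \<Gamma> x y * g y) UNIV)"
    unfolding nn_integral_measure_pmf pmf_K
    by (subst ennreal_mult'[symmetric]) (use assms jm_nonneg in \<open>auto intro!: nn_count_infsum[simplified]\<close>)
  show "integrable (K x) g"
    by (rule integrableI_nn_integral_finite[OF _ _ nn]) (use assms in auto)
  show "integral\<^sup>L (K x) g = infsum (\<lambda>y. jump_matrix \<Gamma> x y * g y) UNIV"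
  proof -
    have "0 \<le> infsum (\<lambda>y. jump_matrix \<Gamma> x y * g y) UNIV"
      by (rule infsum_nonneg) (use assms jm_nonneg in auto)
    then show ?thesis by (subst integral_eq_nn_integral) (use assms nn in auto)
  qed
qed

end

context genl begin

primrec paths :: "'a \<Rightarrow> nat \<Rightarrow> 'a list pmf" where
  "paths x 0 = return_pmf [x]"
| "paths x (Suc n) = bind_pmf (K x) (\<lambda>y. map_pmf (Cons x) (paths y n))"

definition pp :: "nat \<Rightarrow> 'a \<Rightarrow> 'a list \<Rightarrow> real" where
  "pp n x l = (if length l = Suc n \<and> l ! 0 = x then (\<Prod>k<n. jump_matrix \<Gamma> (l!k) (l!Suc k)) else 0)"

lemma integral_pmf_single:
  fixes c :: real
  shows "(\<integral>y. (if y = a then c else 0) \<partial>measure_pmf p) = pmf p a * c"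
  by (subst integral_measure_pmf[of "{a}"]) (auto split: if_splits)

lemma pmf_paths: "pmf (paths x n) l = pp n x l"
proof (induction n arbitrary: x l)
  case 0
  show ?case
  proof (cases l)
    case Nil then show ?thesis by (simp add: pp_def)
  next
    case (Cons z l') then show ?thesis by (cases l') (auto simp: pp_def)
  qed
next
  case (Suc n)
  show ?case
  proof (cases l)
    case Nil
    have "Cons x -` {[]} = {}" by auto
    then show ?thesis using Nil by (simp add: pmf_bind pmf_map pp_def)
  next
    case (Cons z l')
    show ?thesis
    proof (cases "z = x")
      case False
      have "Cons x -` {l} = {}" using Cons False by auto
      then show ?thesis using Cons False by (simp add: pmf_bind pmf_map pp_def)
    next
      case True
      have "pmf (paths x (Suc n)) l = (\<integral>y. pmf (paths y n) l' \<partial>K x)"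
        using Cons True by (simp add: pmf_bind pmf_map_inj' inj_on_def)
      also have "\<dots> = (\<integral>y. (if y = l'!0 then pp n (l'!0) l' else 0) \<partial>K x)"
        by (rule Bochner_Integration.integral_cong) (auto simp: Suc.IH pp_def)
      also have "\<dots> = jump_matrix \<Gamma> x (l'!0) * pp n (l'!0) l'"
        by (simp add: integral_pmf_single pmf_K)
      also have "\<dots> = pp (Suc n) x l"
      proof -
        have e: "(\<Prod>k<Suc n. jump_matrix \<Gamma> ((x#l')!k) ((x#l')!Suc k))
             = jump_matrix \<Gamma> x (l'!0) * (\<Prod>k<n. jump_matrix \<Gamma> (l'!k) (l'!Suc k))"
          by (subst prod.lessThan_Suc_shift) simp
        show ?thesis using Cons True by (simp only: pp_def e) auto
      qed
      finally show ?thesis .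
    qed
  qed
qed

primrec uu :: "('a \<Rightarrow> real) \<Rightarrow> nat \<Rightarrow> 'a \<Rightarrow> real" where
  "uu \<phi> 0 x = 1"
| "uu \<phi> (Suc n) x = \<phi> x * (\<integral>y. uu \<phi> n y \<partial>K x)"

lemma integrable_bdd_pmf:
  fixes f :: "'b \<Rightarrow> real"
  assumes "\<And>y. \<bar>f y\<bar> \<le> B"
  shows "integrable (measure_pmf p) f"
  by (rule measure_pmf.integrable_const_bound[where B=B]) (use assms in auto)

lemma uu_bounds:
  assumes "\<And>y. 0 \<le> \<phi> y" "\<And>y. \<phi> y \<le> 1"
  shows "0 \<le> uu \<phi> n x \<and> uu \<phi> n x \<le> 1"
proof (induction n arbitrary: x)
  case 0 then show ?case by simp
next
  case (Suc n)
  have int: "integrable (K x) (uu \<phi> n)"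
    by (rule integrable_bdd_pmf[where B=1]) (use Suc in auto)
  have a: "0 \<le> (\<integral>y. uu \<phi> n y \<partial>K x)"
    by (rule integral_nonneg_AE) (use Suc in auto)
  have "(\<integral>y. uu \<phi> n y \<partial>K x) \<le> (\<integral>y. 1 \<partial>K x)"
    by (rule integral_mono[OF int]) (use Suc in auto)
  then have b: "(\<integral>y. uu \<phi> n y \<partial>K x) \<le> 1" by simp
  show ?case using a b assms[of x] by (auto intro: mult_le_one)
qed

lemma uu_paths:
  assumes "\<And>y. 0 \<le> \<phi> y" "\<And>y. \<phi> y \<le> 1"
  shows "ennreal (uu \<phi> n x) = (\<integral>\<^sup>+l. ennreal (\<Prod>k<n. \<phi> (l!k)) \<partial>paths x n)"
proof (induction n arbitrary: x)
  case 0 then show ?case by simp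
next
  case (Suc n)
  have "(\<integral>\<^sup>+l. ennreal (\<Prod>k<Suc n. \<phi> (l!k)) \<partial>paths x (Suc n))
      = (\<integral>\<^sup>+y. (\<integral>\<^sup>+l. ennreal (\<phi> x) * ennreal (\<Prod>k<n. \<phi> (l!k)) \<partial>paths y n) \<partial>K x)"
  proof -
    have e: "\<And>l. (\<Prod>k<Suc n. \<phi> ((x#l)!k)) = \<phi> x * (\<Prod>k<n. \<phi> (l!k))"
      by (simp add: prod.lessThan_Suc_shift del: prod.lessThan_Suc)
    show ?thesis by (simp add: e ennreal_mult' assms prod_nonneg del: prod.lessThan_Suc)
  qed
  also have "\<dots> = (\<integral>\<^sup>+y. ennreal (\<phi> x) * ennreal (uu \<phi> n y) \<partial>K x)"
    by (simp add: nn_integral_cmult Suc.IH)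
  also have "\<dots> = ennreal (\<phi> x) * (\<integral>\<^sup>+y. ennreal (uu \<phi> n y) \<partial>K x)"
    by (simp add: nn_integral_cmult)
  also have "(\<integral>\<^sup>+y. ennreal (uu \<phi> n y) \<partial>K x) = ennreal (\<integral>y. uu \<phi> n y \<partial>K x)"
    by (rule nn_integral_eq_integral) (use uu_bounds[OF assms] in \<open>auto intro!: integrable_bdd_pmf[where B=1]\<close>)
  finally show ?case by (simp add: ennreal_mult' assms)
qed

end

definition ind :: "real \<Rightarrow> real \<Rightarrow> real" where "ind c r = (if c < r then 1 else 0)"

lemma ind_01: "0 \<le> ind c r" "ind c r \<le> 1" by (auto simp: ind_def)

lemma measurable_ind[measurable]: "f \<in> borel_measurable M \<Longrightarrow> g \<in> borel_measurable M \<Longrightarrow> (\<lambda>\<omega>. ind (g \<omega>) (f \<omega>)) \<in> borel_measurable M"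
  unfolding ind_def by measurable

lemma factor_01: "0 \<le> a \<Longrightarrow> a \<le> 1 \<Longrightarrow> 0 \<le> t \<Longrightarrow> 0 \<le> ind 0 r - a * ind t r \<and> ind 0 r - a * ind t r \<le> 1"
  by (auto simp: ind_def)

lemma prod_ind: "(\<Prod>k<(n::nat). ind (s k) (r k)) = (if \<forall>k<n. s k < r k then 1 else 0)"
  by (induction n) (auto simp: ind_def less_Suc_eq)

lemma prod_split3:
  fixes f g h :: "nat \<Rightarrow> real"
  assumes "m < n" "\<And>k. k < n \<Longrightarrow> k \<noteq> m \<Longrightarrow> f k = g k \<and> f k = h k" "f m = g m - c * h m"
  shows "(\<Prod>k<n. f k) = (\<Prod>k<n. g k) - c * (\<Prod>k<n. h k)"
proof -
  have m: "m \<in> {..<n}" using assms by auto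
  have R1: "(\<Prod>k\<in>{..<n}-{m}. f k) = (\<Prod>k\<in>{..<n}-{m}. g k)"
    by (rule prod.cong) (use assms(2) in auto)
  have fh: "\<And>k. k\<in>{..<n}-{m} \<Longrightarrow> f k = h k" using assms(2) by blast
  have R2: "(\<Prod>k\<in>{..<n}-{m}. f k) = (\<Prod>k\<in>{..<n}-{m}. h k)"
    by (rule prod.cong) (use fh in auto)
  note R = R1 R2
  show ?thesis
    using prod.remove[OF finite_lessThan m, of f] prod.remove[OF finite_lessThan m, of g]
      prod.remove[OF finite_lessThan m, of h] R assms(3)
    by (simp add: algebra_simps)
qed

locale ctmcl = genl +
  fixes x0 :: 'a and M :: "'w measure" and \<xi> :: "nat \<Rightarrow> 'w \<Rightarrow> 'a" and \<sigma> :: "nat \<Rightarrow> 'w \<Rightarrow> real"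
  assumes ctmc: "ctmc_from \<Gamma> x0 M \<xi> \<sigma>"
begin

lemma prob: "prob_space M" using ctmc unfolding ctmc_from_def by blast

lemma meas_xi[measurable]: "\<xi> k \<in> measurable M (count_space UNIV)"
  using ctmc unfolding ctmc_from_def by blast

lemma meas_sigma[measurable]: "\<sigma> k \<in> borel_measurable M"
  using ctmc unfolding ctmc_from_def by blast

lemma fdd: "(\<forall>k<n. 0 \<le> ts k) \<Longrightarrow>
        measure M {\<omega> \<in> space M. (\<forall>k\<le>n. \<xi> k \<omega> = xs k) \<and> (\<forall>k<n. ts k < \<sigma> (Suc k) \<omega>)}
        = (if xs 0 = x0 then 1 else 0) *
          (\<Prod>k<n. jump_matrix \<Gamma> (xs k) (xs (Suc k)) * exp (- total_rate \<Gamma> (xs k) * ts k))"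
  using ctmc unfolding ctmc_from_def by blast

definition pev :: "nat \<Rightarrow> (nat \<Rightarrow> 'a) \<Rightarrow> 'w set" where
  "pev n xs = {\<omega> \<in> space M. \<forall>k\<le>n. \<xi> k \<omega> = xs k}"

lemma pev_sets[measurable]: "pev n xs \<in> sets M"
  unfolding pev_def by measurable

definition pw :: "nat \<Rightarrow> (nat \<Rightarrow> 'a) \<Rightarrow> real" where
  "pw n xs = (if xs 0 = x0 then 1 else 0) * (\<Prod>k<n. jump_matrix \<Gamma> (xs k) (xs (Suc k)))"

lemma integrable_bdd1:
  fixes f :: "'w \<Rightarrow> real"
  assumes "f \<in> borel_measurable M" "\<And>\<omega>. \<bar>f \<omega>\<bar> \<le> B"
  shows "integrable M f"
proof -
  interpret P: prob_space M by (rule prob)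
  show ?thesis by (rule P.integrable_const_bound[where B=B]) (use assms in auto)
qed

definition GG :: "nat \<Rightarrow> (nat \<Rightarrow> real) \<Rightarrow> (nat \<Rightarrow> real) \<Rightarrow> nat \<Rightarrow> (nat \<Rightarrow> real) \<Rightarrow> 'w \<Rightarrow> nat \<Rightarrow> real" where
  "GG m a t n s \<omega> k = (if k < m then ind 0 (\<sigma> (Suc k) \<omega>) - a k * ind (t k) (\<sigma> (Suc k) \<omega>)
                       else ind (s k) (\<sigma> (Suc k) \<omega>))"

lemma GG_01:
  assumes "\<forall>k. 0 \<le> t k" "\<forall>k. 0 \<le> a k \<and> a k \<le> 1"
  shows "0 \<le> GG m a t n s \<omega> k \<and> GG m a t n s \<omega> k \<le> 1"
  using assms[rule_format, of k] by (auto simp: GG_def ind_def)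

lemma GG_meas[measurable]: "(\<lambda>\<omega>. \<Prod>k<n. GG m a t n s \<omega> k) \<in> borel_measurable M"
  unfolding GG_def by measurable

lemma C1:
  assumes "m \<le> n" "\<forall>k. 0 \<le> s k" "\<forall>k. 0 \<le> t k" "\<forall>k. 0 \<le> a k \<and> a k \<le> 1"
  shows "(\<integral>\<omega>. indicator (pev n xs) \<omega> * (\<Prod>k<n. GG m a t n s \<omega> k) \<partial>M)
       = pw n xs * (\<Prod>k<n. if k < m then 1 - a k * exp (- total_rate \<Gamma> (xs k) * t k)
                            else exp (- total_rate \<Gamma> (xs k) * s k))"
  using assms(1,2)
proof (induction m arbitrary: s)
  case 0
  let ?E = "{\<omega> \<in> space M. (\<forall>k\<le>n. \<xi> k \<omega> = xs k) \<and> (\<forall>k<n. s k < \<sigma> (Suc k) \<omega>)}"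
  have E: "?E \<in> sets M" by measurable
  have "(\<integral>\<omega>. indicator (pev n xs) \<omega> * (\<Prod>k<n. GG 0 a t n s \<omega> k) \<partial>M) = (\<integral>\<omega>. indicator ?E \<omega> \<partial>M)"
    by (rule Bochner_Integration.integral_cong) (auto simp: GG_def prod_ind pev_def indicator_def)
  also have "\<dots> = measure M ?E"
  proof -
    interpret P: prob_space M by (rule prob)
    show ?thesis using E by simp
  qed
  also have "\<dots> = (if xs 0 = x0 then 1 else 0) *
          (\<Prod>k<n. jump_matrix \<Gamma> (xs k) (xs (Suc k)) * exp (- total_rate \<Gamma> (xs k) * s k))"
    by (rule fdd) (use 0 in auto)
  finally show ?case by (simp add: pw_def prod.distrib)
next
  case (Suc m)
  have mn: "m < n" using Suc by auto
  let ?s0 = "s(m := 0)" and ?s1 = "s(m := t m)"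
  have pt: "(\<Prod>k<n. GG (Suc m) a t n s \<omega> k) = (\<Prod>k<n. GG m a t n ?s0 \<omega> k) - a m * (\<Prod>k<n. GG m a t n ?s1 \<omega> k)" for \<omega>
    by (rule prod_split3[OF mn]) (auto simp: GG_def ind_def)
  have i0: "integrable M (\<lambda>\<omega>. indicator (pev n xs) \<omega> * (\<Prod>k<n. GG m a t n s' \<omega> k))" for s'
  proof (rule integrable_bdd1[where B=1])
    show "(\<lambda>\<omega>. indicator (pev n xs) \<omega> * (\<Prod>k<n. GG m a t n s' \<omega> k)) \<in> borel_measurable M" by measurable
    fix \<omega>
    have "\<bar>\<Prod>k<n. GG m a t n s' \<omega> k\<bar> \<le> 1"
      using GG_01[OF assms(3,4)] by (auto simp: abs_prod intro!: prod_le_1)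
    then show "\<bar>indicator (pev n xs) \<omega> * (\<Prod>k<n. GG m a t n s' \<omega> k)\<bar> \<le> 1"
      by (auto simp: indicator_def)
  qed
  have "(\<integral>\<omega>. indicator (pev n xs) \<omega> * (\<Prod>k<n. GG (Suc m) a t n s \<omega> k) \<partial>M)
     = (\<integral>\<omega>. indicator (pev n xs) \<omega> * (\<Prod>k<n. GG m a t n ?s0 \<omega> k)
           - a m * (indicator (pev n xs) \<omega> * (\<Prod>k<n. GG m a t n ?s1 \<omega> k)) \<partial>M)"
    by (simp add: pt algebra_simps)
  also have "\<dots> = (\<integral>\<omega>. indicator (pev n xs) \<omega> * (\<Prod>k<n. GG m a t n ?s0 \<omega> k) \<partial>M)
           - a m * (\<integral>\<omega>. indicator (pev n xs) \<omega> * (\<Prod>k<n. GG m a t n ?s1 \<omega> k) \<partial>M)"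
    using i0 by simp
  also have "\<dots> = pw n xs * (\<Prod>k<n. if k < m then 1 - a k * exp (- total_rate \<Gamma> (xs k) * t k)
                            else exp (- total_rate \<Gamma> (xs k) * ?s0 k))
        - a m * (pw n xs * (\<Prod>k<n. if k < m then 1 - a k * exp (- total_rate \<Gamma> (xs k) * t k)
                            else exp (- total_rate \<Gamma> (xs k) * ?s1 k)))"
    using Suc.prems assms(3) by (simp add: Suc.IH)
  also have "\<dots> = pw n xs * (\<Prod>k<n. if k < Suc m then 1 - a k * exp (- total_rate \<Gamma> (xs k) * t k)
                            else exp (- total_rate \<Gamma> (xs k) * s k))"
  proof -
    have eq: "(\<Prod>k<n. if k < Suc m then 1 - a k * exp (- total_rate \<Gamma> (xs k) * t k)
                            else exp (- total_rate \<Gamma> (xs k) * s k))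
      = (\<Prod>k<n. if k < m then 1 - a k * exp (- total_rate \<Gamma> (xs k) * t k)
                            else exp (- total_rate \<Gamma> (xs k) * ?s0 k))
        - a m * (\<Prod>k<n. if k < m then 1 - a k * exp (- total_rate \<Gamma> (xs k) * t k)
                            else exp (- total_rate \<Gamma> (xs k) * ?s1 k))"
      by (rule prod_split3[OF mn]) auto
    show ?thesis by (subst eq) (simp add: algebra_simps)
  qed
  finally show ?case .
qed

definition Z :: "('a \<Rightarrow> real) \<Rightarrow> ('a \<Rightarrow> real) \<Rightarrow> nat \<Rightarrow> 'w \<Rightarrow> real" where
  "Z A T n \<omega> = (\<Prod>k<n. ind 0 (\<sigma> (Suc k) \<omega>) - A (\<xi> k \<omega>) * ind (T (\<xi> k \<omega>)) (\<sigma> (Suc k) \<omega>))"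

lemma meas_comp_xi[measurable]: "(\<lambda>\<omega>. (A :: 'a \<Rightarrow> real) (\<xi> k \<omega>)) \<in> borel_measurable M"
  by (rule measurable_compose[OF meas_xi]) simp

lemma Z_meas[measurable]: "Z A T n \<in> borel_measurable M"
  unfolding Z_def by measurable

lemma Z_01:
  assumes "\<forall>y. 0 \<le> A y \<and> A y \<le> 1" "\<forall>y. 0 \<le> T y"
  shows "0 \<le> Z A T n \<omega> \<and> Z A T n \<omega> \<le> 1"
proof -
  have "\<And>k. 0 \<le> ind 0 (\<sigma> (Suc k) \<omega>) - A (\<xi> k \<omega>) * ind (T (\<xi> k \<omega>)) (\<sigma> (Suc k) \<omega>)
          \<and> ind 0 (\<sigma> (Suc k) \<omega>) - A (\<xi> k \<omega>) * ind (T (\<xi> k \<omega>)) (\<sigma> (Suc k) \<omega>) \<le> 1"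
    using assms by (intro factor_01) auto
  then show ?thesis unfolding Z_def by (auto intro!: prod_nonneg prod_le_1)
qed

definition phi :: "('a \<Rightarrow> real) \<Rightarrow> ('a \<Rightarrow> real) \<Rightarrow> 'a \<Rightarrow> real" where
  "phi A T y = 1 - A y * exp (- total_rate \<Gamma> y * T y)"

lemma phi_01:
  assumes "\<forall>y. 0 \<le> A y \<and> A y \<le> 1" "\<forall>y. 0 \<le> T y"
  shows "0 \<le> phi A T y \<and> phi A T y \<le> 1"
proof -
  have e: "exp (- total_rate \<Gamma> y * T y) \<le> 1" "0 \<le> exp (- total_rate \<Gamma> y * T y)"
    using rate_pos[of y] assms(2) by auto
  have "A y * exp (- total_rate \<Gamma> y * T y) \<le> 1"
    using e assms(1) by (metis mult_le_one)
  moreover have "0 \<le> A y * exp (- total_rate \<Gamma> y * T y)" using e assms(1) by simp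
  ultimately show ?thesis unfolding phi_def by auto
qed

lemma C2:
  assumes A: "\<forall>y. 0 \<le> A y \<and> A y \<le> 1" and T: "\<forall>y. 0 \<le> T y" and l: "length l = Suc n"
  shows "(\<integral>\<omega>. indicator (pev n (\<lambda>k. l!k)) \<omega> * Z A T n \<omega> \<partial>M) = pp n x0 l * (\<Prod>k<n. phi A T (l!k))"
proof -
  let ?a = "\<lambda>k. A (l!k)" and ?t = "\<lambda>k. T (l!k)" and ?s = "\<lambda>k::nat. 0::real"
  have "(\<integral>\<omega>. indicator (pev n (\<lambda>k. l!k)) \<omega> * Z A T n \<omega> \<partial>M)
      = (\<integral>\<omega>. indicator (pev n (\<lambda>k. l!k)) \<omega> * (\<Prod>k<n. GG n ?a ?t n ?s \<omega> k) \<partial>M)"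
  proof (rule Bochner_Integration.integral_cong)
    fix \<omega> assume "\<omega> \<in> space M"
    show "indicator (pev n (\<lambda>k. l!k)) \<omega> * Z A T n \<omega> = indicator (pev n (\<lambda>k. l!k)) \<omega> * (\<Prod>k<n. GG n ?a ?t n ?s \<omega> k)"
    proof (cases "\<omega> \<in> pev n (\<lambda>k. l!k)")
      case True
      then have "\<And>k. k < n \<Longrightarrow> \<xi> k \<omega> = l!k" unfolding pev_def by auto
      then have "Z A T n \<omega> = (\<Prod>k<n. GG n ?a ?t n ?s \<omega> k)"
        unfolding Z_def GG_def by (intro prod.cong) auto
      then show ?thesis by simp
    qed simp
  qed simp
  also have "\<dots> = pw n (\<lambda>k. l!k) * (\<Prod>k<n. if k < n then 1 - ?a k * exp (- total_rate \<Gamma> (l!k) * ?t k)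
                            else exp (- total_rate \<Gamma> (l!k) * ?s k))"
    by (rule C1) (use A T in auto)
  also have "\<dots> = pp n x0 l * (\<Prod>k<n. phi A T (l!k))"
    using l by (simp add: pw_def pp_def phi_def)
  finally show ?thesis .
qed

lemma C3:
  assumes A: "\<forall>y. 0 \<le> A y \<and> A y \<le> 1" and T: "\<forall>y. 0 \<le> T y"
  shows "(\<integral>\<^sup>+\<omega>. ennreal (Z A T n \<omega>) \<partial>M) = (\<integral>\<^sup>+l. ennreal (\<Prod>k<n. phi A T (l!k)) \<partial>paths x0 n)"
proof -
  let ?LS = "{l::'a list. length l = Suc n}"
  define F where "F l \<omega> = ennreal (indicator (pev n (\<lambda>k. l!k)) \<omega> * Z A T n \<omega>) * indicator ?LS l" for l \<omega>
  have Fm: "F l \<in> borel_measurable M" for l unfolding F_def by measurable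
  have pt: "ennreal (Z A T n \<omega>) = (\<integral>\<^sup>+l. F l \<omega> \<partial>count_space UNIV)" if \<omega>: "\<omega> \<in> space M" for \<omega>
  proof -
    let ?L = "map (\<lambda>k. \<xi> k \<omega>) [0..<Suc n]"
    have "F l \<omega> = ennreal (Z A T n \<omega>) * indicator {?L} l" for l
    proof -
      have "(l \<in> ?LS \<and> \<omega> \<in> pev n (\<lambda>k. l!k)) \<longleftrightarrow> l = ?L"
      proof
        assume a: "l \<in> ?LS \<and> \<omega> \<in> pev n (\<lambda>k. l!k)"
        show "l = ?L"
        proof (rule nth_equalityI)
          show "length l = length ?L" using a by simp
          fix i assume "i < length l"
          then have "i \<le> n" using a by simp
          then show "l ! i = ?L ! i" using a unfolding pev_def
            by (simp del: upt_Suc add: nth_map_upt)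
        qed
      next
        assume "l = ?L"
        then show "l \<in> ?LS \<and> \<omega> \<in> pev n (\<lambda>k. l!k)"
          using \<omega> unfolding pev_def by (auto simp del: upt_Suc)
      qed
      then show ?thesis unfolding F_def by (auto simp: indicator_def)
    qed
    then show ?thesis by simp
  qed
  have "(\<integral>\<^sup>+\<omega>. ennreal (Z A T n \<omega>) \<partial>M) = (\<integral>\<^sup>+\<omega>. (\<integral>\<^sup>+l. F l \<omega> \<partial>count_space UNIV) \<partial>M)"
    by (rule nn_integral_cong) (use pt in auto)
  also have "\<dots> = (\<integral>\<^sup>+l. (\<integral>\<^sup>+\<omega>. F l \<omega> \<partial>M) \<partial>count_space UNIV)"
    by (rule nn_integral_count_space_nn_integral) (auto simp: Fm)
  also have "\<dots> = (\<integral>\<^sup>+l. ennreal (pmf (paths x0 n) l) * ennreal (\<Prod>k<n. phi A T (l!k)) \<partial>count_space UNIV)"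
  proof (rule nn_integral_cong)
    fix l :: "'a list"
    have pnn: "0 \<le> (\<Prod>k<n. phi A T (l!k))" using phi_01[OF A T] by (auto intro!: prod_nonneg)
    show "(\<integral>\<^sup>+\<omega>. F l \<omega> \<partial>M) = ennreal (pmf (paths x0 n) l) * ennreal (\<Prod>k<n. phi A T (l!k))"
    proof (cases "length l = Suc n")
      case True
      have int: "integrable M (\<lambda>\<omega>. indicator (pev n (\<lambda>k. l!k)) \<omega> * Z A T n \<omega>)"
        by (rule integrable_bdd1[where B=1]) (use Z_01[OF A T] in \<open>auto simp: indicator_def\<close>)
      have "(\<integral>\<^sup>+\<omega>. F l \<omega> \<partial>M) = (\<integral>\<^sup>+\<omega>. ennreal (indicator (pev n (\<lambda>k. l!k)) \<omega> * Z A T n \<omega>) \<partial>M)"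
        using True unfolding F_def by simp
      also have "\<dots> = ennreal (\<integral>\<omega>. indicator (pev n (\<lambda>k. l!k)) \<omega> * Z A T n \<omega> \<partial>M)"
        by (rule nn_integral_eq_integral[OF int]) (use Z_01[OF A T] in auto)
      also have "\<dots> = ennreal (pp n x0 l * (\<Prod>k<n. phi A T (l!k)))"
        by (simp add: C2[OF A T True])
      finally show ?thesis using pnn by (simp add: pmf_paths ennreal_mult pp_def prod_nonneg jm_nonneg)
    next
      case False
      then show ?thesis unfolding F_def by (simp add: pmf_paths pp_def)
    qed
  qed
  also have "\<dots> = (\<integral>\<^sup>+l. ennreal (\<Prod>k<n. phi A T (l!k)) \<partial>paths x0 n)"
    by (simp add: nn_integral_measure_pmf)
  finally show ?thesis .
qed

end

context ctmcl begin

definition Cn :: "nat \<Rightarrow> 'w set" where "Cn n = {\<omega> \<in> space M. \<forall>k<n. 0 < \<sigma> (Suc k) \<omega>}"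

lemma Cn_sets[measurable]: "Cn n \<in> sets M" unfolding Cn_def by measurable

lemma Cn_prob: "emeasure M (Cn n) = 1"
proof -
  have "emeasure M (Cn n) = (\<integral>\<^sup>+\<omega>. ennreal (Z (\<lambda>_. 0) (\<lambda>_. 0) n \<omega>) \<partial>M)"
  proof -
    have "(\<integral>\<^sup>+\<omega>. ennreal (Z (\<lambda>_. 0) (\<lambda>_. 0) n \<omega>) \<partial>M) = (\<integral>\<^sup>+\<omega>. indicator (Cn n) \<omega> \<partial>M)"
      by (rule nn_integral_cong) (auto simp: Z_def prod_ind Cn_def indicator_def)
    then show ?thesis by simp
  qed
  also have "\<dots> = (\<integral>\<^sup>+l. ennreal (\<Prod>k<n. phi (\<lambda>_. 0) (\<lambda>_. 0) (l!k)) \<partial>paths x0 n)"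
    by (rule C3) auto
  also have "\<dots> = 1" by (simp add: phi_def)
  finally show ?thesis .
qed

lemma expl_meas[measurable]: "explosion_time \<sigma> \<in> borel_measurable M"
  unfolding explosion_time_def by measurable

lemma Z_lower:
  assumes T: "\<forall>y. 0 \<le> T y" and \<omega>: "\<omega> \<in> Cn n" and R: "0 \<le> R" and e: "explosion_time \<sigma> \<omega> \<le> ennreal R"
  shows "exp (- R) \<le> Z (\<lambda>y. 1 - exp (- T y)) T n \<omega>"
proof -
  have pos: "\<And>k. k < n \<Longrightarrow> 0 < \<sigma> (Suc k) \<omega>" using \<omega> unfolding Cn_def by auto
  have fac: "exp (- \<sigma> (Suc k) \<omega>) \<le> ind 0 (\<sigma> (Suc k) \<omega>) - (1 - exp (- T (\<xi> k \<omega>))) * ind (T (\<xi> k \<omega>)) (\<sigma> (Suc k) \<omega>)"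
    if "k < n" for k
    using pos[OF that] by (auto simp: ind_def)
  have "(\<Sum>k<n. ennreal (\<sigma> (Suc k) \<omega>)) \<le> explosion_time \<sigma> \<omega>"
    unfolding explosion_time_def by (rule sum_le_suminf) (auto intro: summableI)
  then have "ennreal (\<Sum>k<n. \<sigma> (Suc k) \<omega>) \<le> ennreal R"
    using e pos by (subst sum_ennreal[symmetric]) (auto intro: less_imp_le)
  then have s: "(\<Sum>k<n. \<sigma> (Suc k) \<omega>) \<le> R" using R by simp
  have "exp (- R) \<le> exp (- (\<Sum>k<n. \<sigma> (Suc k) \<omega>))" using s by simp
  also have "\<dots> = (\<Prod>k<n. exp (- \<sigma> (Suc k) \<omega>))"
    by (simp add: exp_sum[symmetric] sum_negf)
  also have "\<dots> \<le> Z (\<lambda>y. 1 - exp (- T y)) T n \<omega>"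
    unfolding Z_def by (rule prod_mono) (use fac in auto)
  finally show ?thesis .
qed

lemma expl_bound:
  assumes T: "\<forall>y. 0 \<le> T y" and R: "0 \<le> R"
  shows "measure M {\<omega> \<in> space M. explosion_time \<sigma> \<omega> \<le> ennreal R}
       \<le> exp R * uu (phi (\<lambda>y. 1 - exp (- T y)) T) n x0"
proof -
  interpret P: prob_space M by (rule prob)
  let ?A = "\<lambda>y. 1 - exp (- T y)"
  have A: "\<forall>y. 0 \<le> ?A y \<and> ?A y \<le> 1" using T by auto
  let ?E = "{\<omega> \<in> space M. explosion_time \<sigma> \<omega> \<le> ennreal R}"
  have E: "?E \<in> sets M" by measurable
  have "ennreal (exp (- R)) * emeasure M (?E \<inter> Cn n) = (\<integral>\<^sup>+\<omega>. ennreal (exp (- R)) * indicator (?E \<inter> Cn n) \<omega> \<partial>M)"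
    using E by (simp add: nn_integral_cmult_indicator)
  also have "\<dots> \<le> (\<integral>\<^sup>+\<omega>. ennreal (Z ?A T n \<omega>) \<partial>M)"
  proof (rule nn_integral_mono)
    fix \<omega> assume "\<omega> \<in> space M"
    show "ennreal (exp (- R)) * indicator (?E \<inter> Cn n) \<omega> \<le> ennreal (Z ?A T n \<omega>)"
    proof (cases "\<omega> \<in> ?E \<inter> Cn n")
      case True
      then have "exp (- R) \<le> Z ?A T n \<omega>" using Z_lower[OF T _ R] by blast
      then show ?thesis using True by (simp add: ennreal_leI)
    qed simp
  qed
  also have "\<dots> = (\<integral>\<^sup>+l. ennreal (\<Prod>k<n. phi ?A T (l!k)) \<partial>paths x0 n)"
    by (rule C3[OF A T])
  also have "\<dots> = ennreal (uu (phi ?A T) n x0)"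
    by (rule uu_paths[symmetric]) (use phi_01[OF A T] in auto)
  finally have "ennreal (exp (- R) * measure M (?E \<inter> Cn n)) \<le> ennreal (uu (phi ?A T) n x0)"
    by (simp add: P.emeasure_eq_measure ennreal_mult)
  then have "exp (- R) * measure M (?E \<inter> Cn n) \<le> uu (phi ?A T) n x0"
    using uu_bounds[of "phi ?A T" n x0] phi_01[OF A T] by (subst (asm) ennreal_le_iff) auto
  then have 1: "measure M (?E \<inter> Cn n) \<le> exp R * uu (phi ?A T) n x0"
    by (simp add: exp_minus field_simps)
  have "measure M (space M - Cn n) = 0"
    using Cn_prob[of n] P.prob_compl[of "Cn n"] by (simp add: P.emeasure_eq_measure)
  moreover have "measure M ?E \<le> measure M (?E \<inter> Cn n) + measure M (space M - Cn n)"
  proof -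
    have "?E \<subseteq> (?E \<inter> Cn n) \<union> (space M - Cn n)" by auto
    then have "measure M ?E \<le> measure M ((?E \<inter> Cn n) \<union> (space M - Cn n))"
      by (intro P.finite_measure_mono) auto
    also have "\<dots> \<le> measure M (?E \<inter> Cn n) + measure M (space M - Cn n)"
      by (intro measure_subadditive) (auto simp: P.emeasure_finite)
    finally show ?thesis .
  qed
  ultimately show ?thesis using 1 by simp
qed

lemma final:
  assumes T: "\<forall>y. 0 \<le> T y" and lim: "(\<lambda>n. uu (phi (\<lambda>y. 1 - exp (- T y)) T) n x0) \<longlonglongrightarrow> 0"
  shows "measure M {\<omega> \<in> space M. explosion_time \<sigma> \<omega> = \<infinity>} = 1"
proof -
  interpret P: prob_space M by (rule prob)
  let ?E = "\<lambda>N::nat. {\<omega> \<in> space M. explosion_time \<sigma> \<omega> \<le> ennreal (real N)}"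
  have E0: "measure M (?E N) = 0" for N
  proof -
    have "(\<lambda>n. exp (real N) * uu (phi (\<lambda>y. 1 - exp (- T y)) T) n x0) \<longlonglongrightarrow> exp (real N) * 0"
      by (intro tendsto_mult tendsto_const lim)
    then have "measure M (?E N) \<le> exp (real N) * 0"
      by (rule LIMSEQ_le_const) (use expl_bound[OF T, of "real N"] in auto)
    then show ?thesis using measure_nonneg[of M "?E N"] by linarith
  qed
  have En: "?E N \<in> null_sets M" for N
    using E0[of N] by (auto simp: null_sets_def P.emeasure_eq_measure)
  have U: "{\<omega> \<in> space M. explosion_time \<sigma> \<omega> \<noteq> \<infinity>} = (\<Union>N. ?E N)"
  proof (intro equalityI subsetI)
    fix \<omega> assume "\<omega> \<in> {\<omega> \<in> space M. explosion_time \<sigma> \<omega> \<noteq> \<infinity>}"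
    then have \<omega>: "\<omega> \<in> space M" "explosion_time \<sigma> \<omega> < top" by (auto simp: less_top)
    obtain N where N: "explosion_time \<sigma> \<omega> < of_nat N" using ennreal_Ex_less_of_nat[OF \<omega>(2)] by blast
    have "explosion_time \<sigma> \<omega> \<le> ennreal (real N)"
      using N unfolding ennreal_of_nat_eq_real_of_nat by (rule less_imp_le)
    then show "\<omega> \<in> (\<Union>N. ?E N)" using \<omega>(1) by blast
  next
    fix \<omega> assume "\<omega> \<in> (\<Union>N. ?E N)"
    then obtain N where N: "\<omega> \<in> space M" "explosion_time \<sigma> \<omega> \<le> ennreal (real N)" by blast
    have "explosion_time \<sigma> \<omega> \<noteq> \<infinity>"
    proof
      assume "explosion_time \<sigma> \<omega> = \<infinity>"
      then have "\<infinity> \<le> ennreal (real N)" using N(2) by simp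
      then show False by (metis infinity_ennreal_def leD ennreal_less_top)
    qed
    then show "\<omega> \<in> {\<omega> \<in> space M. explosion_time \<sigma> \<omega> \<noteq> \<infinity>}" using N(1) by blast
  qed
  have "{\<omega> \<in> space M. explosion_time \<sigma> \<omega> \<noteq> \<infinity>} \<in> null_sets M"
    unfolding U by (rule null_sets_UN) (rule En)
  then have "measure M {\<omega> \<in> space M. explosion_time \<sigma> \<omega> \<noteq> \<infinity>} = 0"
    by (simp add: null_sets_def P.emeasure_eq_measure)
  moreover have "{\<omega> \<in> space M. explosion_time \<sigma> \<omega> = \<infinity>} = space M - {\<omega> \<in> space M. explosion_time \<sigma> \<omega> \<noteq> \<infinity>}"
    by auto
  ultimately show ?thesis
    using P.prob_compl[of "{\<omega> \<in> space M. explosion_time \<sigma> \<omega> \<noteq> \<infinity>}"] by simp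
qed

end

lemma int_bdd_pmf:
  fixes f :: "'b \<Rightarrow> real"
  assumes "\<And>y. \<bar>f y\<bar> \<le> B"
  shows "integrable (measure_pmf p) f"
  by (rule measure_pmf.integrable_const_bound[where B=B]) (use assms in auto)

lemma maxp:
  fixes v h \<psi> b :: "'a \<Rightarrow> real" and Kk :: "'a \<Rightarrow> 'a pmf" and c :: real
  assumes v01: "\<And>y. 0 \<le> v y \<and> v y \<le> 1"
    and fixp: "\<And>y. v y = (1 - \<psi> y) * (\<integral>z. v z \<partial>Kk y)"
    and \<psi>01: "\<And>y. 0 \<le> \<psi> y \<and> \<psi> y \<le> 1"
    and c: "0 < c" "c \<le> 1"
    and \<psi>c: "\<And>y. c \<le> \<psi> y \<or> c * b y \<le> \<psi> y"
    and b: "\<And>y. 0 < b y"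
    and h0: "\<And>y. 0 \<le> h y"
    and hfin: "\<And>C. finite {y. h y \<le> C}"
    and hint: "\<And>y. integrable (Kk y) h"
    and hdrift: "\<And>y. (\<integral>z. h z \<partial>Kk y) \<le> h y + b y"
  shows "v y = 0"
proof -
  define S where "S = Sup (range v)"
  have bdd: "bdd_above (range v)" using v01 by (auto intro: bdd_aboveI[where M=1])
  have vS: "v y \<le> S" for y unfolding S_def using bdd by (auto intro: cSUP_upper)
  have S0: "0 \<le> S" using vS[of y] v01[of y] by linarith
  have vint: "integrable (Kk y) v" for y by (rule int_bdd_pmf[where B=1]) (use v01 in auto)
  have IS: "(\<integral>z. v z \<partial>Kk y) \<le> S" for y
  proof -
    have "(\<integral>z. v z \<partial>Kk y) \<le> (\<integral>z. S \<partial>Kk y)"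
      by (rule integral_mono[OF vint]) (use vS in auto)
    then show ?thesis by simp
  qed
  have I0: "0 \<le> (\<integral>z. v z \<partial>Kk y)" for y by (rule integral_nonneg_AE) (use v01 in auto)
  have key: "v x \<le> \<epsilon> * h x + max (\<epsilon> / c) ((1 - c) * S)" if \<epsilon>: "0 < \<epsilon>" for \<epsilon> x
  proof -
    define w where "w y = v y - \<epsilon> * h y" for y
    show ?thesis
    proof (cases "\<forall>y. w y \<le> 0")
      case True
      then have "v x \<le> \<epsilon> * h x" by (simp add: w_def)
      moreover have "0 \<le> max (\<epsilon>/c) ((1-c)*S)"
      proof -
        have "0 \<le> \<epsilon>/c" using \<epsilon> c by simp
        then show ?thesis by (simp add: le_max_iff_disj)
      qed
      ultimately show ?thesis by linarith
    next
      case False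
      then obtain y1 where y1: "0 < w y1" by (auto simp: not_le)
      define Sl where "Sl = {y. h y \<le> 1/\<epsilon>}"
      have fin: "finite Sl" unfolding Sl_def by (rule hfin)
      have "\<epsilon> * h y1 < 1" using y1 v01[of y1] by (simp add: w_def)
      then have y1S: "y1 \<in> Sl" unfolding Sl_def using \<epsilon> by (simp add: le_divide_eq mult.commute)
      define m where "m = Max (w ` Sl)"
      have "m \<in> w ` Sl" unfolding m_def using fin y1S by (intro Max_in) auto
      then obtain z0 where z0: "z0 \<in> Sl" "w z0 = m" by auto
      have mS: "w y \<le> m" if "y \<in> Sl" for y unfolding m_def using fin that by (intro Max_ge) auto
      have wmax: "w y \<le> w z0" for y
      proof (cases "y \<in> Sl")
        case True then show ?thesis using mS z0 by auto
      next
        case False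
        then have "1/\<epsilon> < h y" unfolding Sl_def by auto
        then have "1 < \<epsilon> * h y" using \<epsilon> by (simp add: divide_less_eq mult.commute)
        then have "w y < 0" using v01[of y] by (simp add: w_def)
        also have "0 < w y1" by fact
        also have "w y1 \<le> w z0" using mS[OF y1S] z0 by auto
        finally show ?thesis by simp
      qed
      have vle: "v y \<le> w z0 + \<epsilon> * h y" for y using wmax[of y] by (simp add: w_def)
      let ?I = "\<integral>z. v z \<partial>Kk z0"
      have "?I \<le> (\<integral>z. w z0 + \<epsilon> * h z \<partial>Kk z0)"
        by (rule integral_mono[OF vint]) (use vle hint in auto)
      also have "\<dots> = w z0 + \<epsilon> * (\<integral>z. h z \<partial>Kk z0)"
        using hint by simp
      also have "\<dots> \<le> w z0 + \<epsilon> * (h z0 + b z0)"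
        using hdrift[of z0] \<epsilon> by simp
      also have "\<dots> = v z0 + \<epsilon> * b z0" by (simp add: w_def algebra_simps)
      finally have I1: "?I \<le> v z0 + \<epsilon> * b z0" .
      have vx0: "v z0 = (1 - \<psi> z0) * ?I" by (rule fixp)
      have "v z0 \<le> max (\<epsilon>/c) ((1-c)*S)"
      proof (cases "c \<le> \<psi> z0")
        case True
        have "v z0 \<le> (1 - c) * ?I" unfolding vx0 using True I0[of z0] by (intro mult_right_mono) auto
        also have "\<dots> \<le> (1 - c) * S" using c IS[of z0] by (intro mult_left_mono) auto
        finally show ?thesis by simp
      next
        case False
        then have cb: "c * b z0 \<le> \<psi> z0" using \<psi>c by blast
        have "\<psi> z0 * ?I \<le> \<epsilon> * b z0" using I1 vx0 by (simp add: algebra_simps)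
        moreover have "c * b z0 * ?I \<le> \<psi> z0 * ?I" using cb I0[of z0] by (intro mult_right_mono)
        ultimately have "b z0 * (c * ?I) \<le> b z0 * \<epsilon>" by (simp add: algebra_simps)
        then have "c * ?I \<le> \<epsilon>" using b[of z0] by simp
        then have "?I \<le> \<epsilon> / c" using c by (simp add: le_divide_eq mult.commute)
        moreover have "v z0 \<le> ?I" unfolding vx0 using \<psi>01[of z0] I0[of z0]
          by (simp add: mult_le_cancel_right1 algebra_simps)
        ultimately show ?thesis by simp
      qed
      moreover have "w z0 \<le> v z0" using h0[of z0] \<epsilon> by (simp add: w_def)
      moreover have "v x = w x + \<epsilon> * h x" by (simp add: w_def)
      ultimately show ?thesis using wmax[of x] by linarith
    qed
  qed
  have vx: "v x \<le> (1 - c) * S" for x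
  proof (rule field_le_epsilon)
    fix e :: real assume e: "0 < e"
    define d where "d = h x + 1 / c"
    have d: "0 < d" unfolding d_def using h0[of x] c by (simp add: add_nonneg_pos)
    define \<epsilon> where "\<epsilon> = e / d"
    have \<epsilon>: "0 < \<epsilon>" unfolding \<epsilon>_def using e d by simp
    have "v x \<le> \<epsilon> * h x + max (\<epsilon> / c) ((1 - c) * S)" by (rule key[OF \<epsilon>])
    also have "\<dots> \<le> \<epsilon> * h x + \<epsilon> / c + (1 - c) * S"
      using \<epsilon> c S0 by (auto simp: max_def)
    also have "\<epsilon> * h x + \<epsilon> / c = e"
    proof -
      have "\<epsilon> * h x + \<epsilon> / c = \<epsilon> * d" unfolding d_def by (simp add: distrib_left)
      also have "\<dots> = e" unfolding \<epsilon>_def using d by simp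
      finally show ?thesis .
    qed
    finally show "v x \<le> (1 - c) * S + e" by simp
  qed
  have "S \<le> (1 - c) * S" unfolding S_def by (rule cSUP_least) (use vx S_def in auto)
  then have "S \<le> 0" using c by (simp add: algebra_simps mult_le_0_iff)
  then show ?thesis using vS[of y] v01[of y] by linarith
qed

context genl begin

lemma uu_dec:
  assumes "\<And>y. 0 \<le> \<phi> y" "\<And>y. \<phi> y \<le> 1"
  shows "uu \<phi> (Suc n) y \<le> uu \<phi> n y"
proof (induction n arbitrary: y)
  case 0 then show ?case using assms by simp
next
  case (Suc n)
  have b: "\<And>m z. \<bar>uu \<phi> m z\<bar> \<le> 1" using uu_bounds[of \<phi>, OF assms] by (simp add: abs_le_iff)
  have "(\<integral>z. uu \<phi> (Suc n) z \<partial>K y) \<le> (\<integral>z. uu \<phi> n z \<partial>K y)"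
    by (rule integral_mono[OF int_bdd_pmf[where B=1, OF b[of "Suc n"]] int_bdd_pmf[where B=1, OF b[of n]]]) (rule Suc.IH)
  then show ?case using assms[of y] unfolding uu.simps(2) by (intro mult_left_mono) auto
qed

lemma uu_lim:
  assumes "\<And>y. 0 \<le> \<phi> y" "\<And>y. \<phi> y \<le> 1"
  obtains v where "\<And>y. (\<lambda>n. uu \<phi> n y) \<longlonglongrightarrow> v y" "\<And>y. 0 \<le> v y \<and> v y \<le> 1"
    "\<And>y. v y = \<phi> y * (\<integral>z. v z \<partial>K y)"
proof -
  have conv: "\<exists>L. (\<lambda>n. uu \<phi> n y) \<longlonglongrightarrow> L \<and> (\<forall>i. L \<le> uu \<phi> i y)" for y
  proof -
    have d: "decseq (\<lambda>n. uu \<phi> n y)" by (rule decseq_SucI) (rule uu_dec[of \<phi>, OF assms])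
    have b: "\<forall>i. 0 \<le> uu \<phi> i y" using uu_bounds[of \<phi>, OF assms] by blast
    from decseq_convergent[OF d b] obtain L where "(\<lambda>n. uu \<phi> n y) \<longlonglongrightarrow> L" "\<forall>i. L \<le> uu \<phi> i y" by blast
    then show ?thesis by blast
  qed
  define v where "v y = lim (\<lambda>n. uu \<phi> n y)" for y
  have lim: "(\<lambda>n. uu \<phi> n y) \<longlonglongrightarrow> v y" for y
    using conv[of y] unfolding v_def by (auto intro: convergentI simp: convergent_LIMSEQ_iff[symmetric])
  have b01: "0 \<le> v y \<and> v y \<le> 1" for y
  proof
    show "0 \<le> v y" by (rule LIMSEQ_le_const[OF lim]) (use uu_bounds[of \<phi>, OF assms] in auto)
    show "v y \<le> 1" by (rule LIMSEQ_le_const2[OF lim]) (use uu_bounds[of \<phi>, OF assms] in auto)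
  qed
  have fp: "v y = \<phi> y * (\<integral>z. v z \<partial>K y)" for y
  proof -
    have "(\<lambda>n. \<integral>z. uu \<phi> n z \<partial>K y) \<longlonglongrightarrow> (\<integral>z. v z \<partial>K y)"
      by (rule integral_dominated_convergence[where w="\<lambda>_. 1"]) (use lim uu_bounds[of \<phi>, OF assms] in auto)
    then have "(\<lambda>n. uu \<phi> (Suc n) y) \<longlonglongrightarrow> \<phi> y * (\<integral>z. v z \<partial>K y)"
      by (simp add: tendsto_mult_left)
    moreover have "(\<lambda>n. uu \<phi> (Suc n) y) \<longlonglongrightarrow> v y" using lim[of y] by (rule LIMSEQ_Suc)
    ultimately show ?thesis using LIMSEQ_unique by blast
  qed
  show ?thesis using that lim b01 fp by blast
qed

end

lemma cmi: "a \<le> b \<Longrightarrow> 0 \<le> c \<Longrightarrow> (\<integral>\<^sup>+y. ennreal c * indicator {a<..b} y \<partial>lborel) = ennreal (c * (b - a))"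
  by (simp add: nn_integral_cmult_indicator ennreal_mult)
lemma inv1: "0 < ga \<Longrightarrow> ga \<le> gy \<Longrightarrow> inverse (ennreal gy) \<le> ennreal (1 / ga)"
  by (simp add: inverse_ennreal) (metis inverse_eq_divide le_imp_inverse_le)
lemma inv2: "0 < gy \<Longrightarrow> gy \<le> ga \<Longrightarrow> ennreal (1 / ga) \<le> inverse (ennreal gy)"
  by (simp add: inverse_ennreal) (metis inverse_eq_divide le_imp_inverse_le)

locale gctx =
  fixes g :: "real \<Rightarrow> real"
  assumes g_mono: "mono_on {0..} g" and g_nonneg: "\<forall>y\<ge>0. 0 \<le> g y"
    and G_fin: "\<forall>z\<ge>0. set_nn_integral lborel {0..z} (\<lambda>y. inverse (ennreal (g y))) < \<infinity>"
begin

definition G :: "real \<Rightarrow> ennreal" where "G z = set_nn_integral lborel {0..z} (\<lambda>y. inverse (ennreal (g y)))"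
definition Gr :: "real \<Rightarrow> real" where "Gr z = enn2real (G z)"

definition g' :: "real \<Rightarrow> real" where "g' y = g (max 0 y)"

lemma g'_mono: "mono g'"
  unfolding g'_def mono_def by (auto intro!: mono_onD[OF g_mono])

lemma g'_meas[measurable]: "g' \<in> borel_measurable borel"
  by (rule borel_measurable_mono[OF g'_mono])

lemma G_g': "G z = (\<integral>\<^sup>+y. inverse (ennreal (g' y)) * indicator {0..z} y \<partial>lborel)"
  unfolding G_def by (rule nn_integral_cong) (auto simp: g'_def indicator_def max_def)

lemma G_fin': "0 \<le> z \<Longrightarrow> G z = ennreal (Gr z)"
  using G_fin unfolding Gr_def G_def by (simp add: less_top[symmetric] ennreal_enn2real)

lemma g_pos: assumes "0 < a" shows "0 < g a"
proof (rule ccontr)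
  assume "\<not> 0 < g a"
  moreover have "0 \<le> g a" using g_nonneg assms by simp
  ultimately have ga: "g a = 0" by simp
  have "g y = 0" if "y \<in> {0..a}" for y
    using mono_onD[OF g_mono, of y a] that ga g_nonneg by force
  then have "G a = (\<integral>\<^sup>+y. \<infinity> * indicator {0..a} y \<partial>lborel)"
    unfolding G_def by (intro nn_integral_cong) (auto simp: indicator_def)
  also have "\<dots> = \<infinity>" using assms by (simp add: nn_integral_cmult_indicator ennreal_mult_top)
  finally have "G a = \<infinity>" .
  moreover have "G a < \<infinity>" using G_fin assms unfolding G_def by simp
  ultimately show False by simp
qed

lemma G_split:
  assumes "0 \<le> a" "a \<le> b"
  shows "G b = G a + (\<integral>\<^sup>+y. inverse (ennreal (g' y)) * indicator {a<..b} y \<partial>lborel)"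
proof -
  have "G b = (\<integral>\<^sup>+y. inverse (ennreal (g' y)) * indicator {0..a} y + inverse (ennreal (g' y)) * indicator {a<..b} y \<partial>lborel)"
    unfolding G_g' using assms by (intro nn_integral_cong) (auto simp: indicator_def)
  also have "\<dots> = G a + (\<integral>\<^sup>+y. inverse (ennreal (g' y)) * indicator {a<..b} y \<partial>lborel)"
    unfolding G_g' by (rule nn_integral_add) auto
  finally show ?thesis .
qed

lemma Gr_nonneg: "0 \<le> Gr z" unfolding Gr_def by simp

lemma G_concave:
  assumes a: "0 \<le> a" and b: "0 \<le> b" and ga: "0 < g a"
  shows "Gr b \<le> Gr a + (b - a) / g a"
proof (cases "a \<le> b")
  case True
  have "(\<integral>\<^sup>+y. inverse (ennreal (g' y)) * indicator {a<..b} y \<partial>lborel)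
      \<le> (\<integral>\<^sup>+y. ennreal (1 / g a) * indicator {a<..b} y \<partial>lborel)"
  proof (rule nn_integral_mono)
    fix y
    show "inverse (ennreal (g' y)) * indicator {a<..b} y \<le> ennreal (1 / g a) * indicator {a<..b} y"
    proof (cases "y \<in> {a<..b}")
      case True
      then have "g a \<le> g' y" unfolding g'_def using a by (auto intro!: mono_onD[OF g_mono])
      then have "inverse (ennreal (g' y)) \<le> ennreal (1 / g a)"
        using ga by (rule inv1[rotated])
      then show ?thesis using True by (simp add: indicator_def)
    qed simp
  qed
  also have "\<dots> = ennreal ((b - a) / g a)"
    using True ga by (subst cmi) auto
  finally have I: "(\<integral>\<^sup>+y. inverse (ennreal (g' y)) * indicator {a<..b} y \<partial>lborel) \<le> ennreal ((b - a) / g a)" .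
  have "G b \<le> G a + ennreal ((b - a) / g a)"
    unfolding G_split[OF a True] by (rule add_left_mono[OF I])
  then have "ennreal (Gr b) \<le> ennreal (Gr a) + ennreal ((b - a) / g a)"
    by (simp only: G_fin'[OF a] G_fin'[OF b])
  also have "\<dots> = ennreal (Gr a + (b - a) / g a)"
    using True ga Gr_nonneg[of a] by (intro ennreal_plus[symmetric]) auto
  finally have "ennreal (Gr b) \<le> ennreal (Gr a + (b - a) / g a)" .
  moreover have "0 \<le> Gr a + (b - a) / g a" using True ga Gr_nonneg[of a] by simp
  ultimately show ?thesis by (rule ennreal_le_iff[THEN iffD1, rotated])
next
  case False
  then have ba: "b \<le> a" by simp
  have "ennreal ((a - b) / g a) = (\<integral>\<^sup>+y. ennreal (1 / g a) * indicator {b<..a} y \<partial>lborel)"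
    using ba ga by (subst cmi) auto
  also have "\<dots> \<le> (\<integral>\<^sup>+y. inverse (ennreal (g' y)) * indicator {b<..a} y \<partial>lborel)"
  proof (rule nn_integral_mono)
    fix y
    show "ennreal (1 / g a) * indicator {b<..a} y \<le> inverse (ennreal (g' y)) * indicator {b<..a} y"
    proof (cases "y \<in> {b<..a}")
      case True
      have y1: "g' y \<le> g a" unfolding g'_def using True b ba by (intro mono_onD[OF g_mono]) auto
      have y2: "0 \<le> g' y" unfolding g'_def using g_nonneg by simp
      note y = y1 y2
      show ?thesis
      proof (cases "g' y = 0")
        case True then show ?thesis by (simp add: indicator_def)
      next
        case False
        then have "ennreal (1 / g a) \<le> inverse (ennreal (g' y))"
          using y False by (intro inv2) auto
        then show ?thesis using \<open>y \<in> {b<..a}\<close> by (simp add: indicator_def)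
      qed
    qed simp
  qed
  finally have I: "ennreal ((a - b) / g a) \<le> (\<integral>\<^sup>+y. inverse (ennreal (g' y)) * indicator {b<..a} y \<partial>lborel)" .
  have "G b + ennreal ((a - b) / g a) \<le> G a"
    unfolding G_split[OF b ba] by (rule add_left_mono[OF I])
  then have "ennreal (Gr b) + ennreal ((a - b) / g a) \<le> ennreal (Gr a)"
    by (simp only: G_fin'[OF a] G_fin'[OF b])
  moreover have "ennreal (Gr b) + ennreal ((a - b) / g a) = ennreal (Gr b + (a - b) / g a)"
    using ba ga Gr_nonneg[of b] by (intro ennreal_plus[symmetric]) auto
  ultimately have "ennreal (Gr b + (a - b) / g a) \<le> ennreal (Gr a)" by metis
  then have "Gr b + (a - b) / g a \<le> Gr a" using Gr_nonneg[of a] by (rule ennreal_le_iff[THEN iffD1, rotated])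
  then show ?thesis by (simp add: diff_divide_distrib)
qed


end

locale mainl = genl \<Gamma> + gctx g for \<Gamma> :: "'a::countable \<Rightarrow> 'a \<Rightarrow> real" and g +
  fixes f :: "'a \<Rightarrow> real"
  assumes f_dom: "in_Dom \<Gamma> f" and f_nonneg: "\<forall>x. 0 \<le> f x" and f_inf: "tends_to_infinity f"
    and G_lim: "((\<lambda>z. set_nn_integral lborel {0..z} (\<lambda>y. inverse (ennreal (g y)))) \<longlongrightarrow> \<infinity>) at_top"
    and drift: "\<forall>x. gen_apply \<Gamma> f x \<le> g (f x)"
begin

lemma Gdiag: "\<Gamma> y y = - total_rate \<Gamma> y"
  using gen unfolding is_generator_def by blast

lemma f_sum_diff: "(\<lambda>z. \<Gamma> y z * f z) summable_on (UNIV - {y})"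
proof -
  have "(\<lambda>z. \<Gamma> y z * \<bar>f z\<bar>) summable_on (UNIV - {y})" using f_dom unfolding in_Dom_def by blast
  then show ?thesis using f_nonneg by simp
qed

lemma f_sum: "(\<lambda>z. jump_matrix \<Gamma> y z * f z) summable_on UNIV"
proof -
  have "(\<lambda>z. \<Gamma> y z * f z * (1 / total_rate \<Gamma> y)) summable_on (UNIV - {y})"
    by (rule summable_on_cmult_left[OF f_sum_diff])
  then have "(\<lambda>z. jump_matrix \<Gamma> y z * f z) summable_on (UNIV - {y})"
    by (rule summable_on_cong[THEN iffD1, rotated]) (auto simp: jump_matrix_def)
  then have "(\<lambda>z. jump_matrix \<Gamma> y z * f z) summable_on insert y (UNIV - {y})" by (simp only: summable_on_insert_iff)
  then show ?thesis by simp
qed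

lemma f_int: "integrable (K y) f"
  using K_integral(1)[OF _ f_sum] f_nonneg by blast

lemma f_integral: "(\<integral>z. f z \<partial>K y) = f y + gen_apply \<Gamma> f y / total_rate \<Gamma> y"
proof -
  let ?S = "infsum (\<lambda>z. \<Gamma> y z * f z) (UNIV - {y})"
  have g0: "0 < total_rate \<Gamma> y" by (rule rate_pos)
  have "(\<integral>z. f z \<partial>K y) = infsum (\<lambda>z. jump_matrix \<Gamma> y z * f z) UNIV"
    using K_integral(2)[OF _ f_sum] f_nonneg by blast
  also have "\<dots> = infsum (\<lambda>z. jump_matrix \<Gamma> y z * f z) (UNIV - {y})"
    by (rule infsum_cong_neutral) (auto simp: jump_matrix_def)
  also have "\<dots> = infsum (\<lambda>z. \<Gamma> y z * f z * (1 / total_rate \<Gamma> y)) (UNIV - {y})"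
    by (rule infsum_cong) (auto simp: jump_matrix_def)
  also have "\<dots> = ?S * (1 / total_rate \<Gamma> y)"
    by (rule infsum_cmult_left) (rule f_sum_diff)
  finally have 1: "(\<integral>z. f z \<partial>K y) = ?S / total_rate \<Gamma> y" by simp
  have "gen_apply \<Gamma> f y = infsum (\<lambda>z. \<Gamma> y z * f z) (insert y (UNIV - {y}))"
    unfolding gen_apply_def by simp
  also have "\<dots> = \<Gamma> y y * f y + ?S"
    by (rule infsum_insert[OF f_sum_diff]) simp
  finally have 2: "gen_apply \<Gamma> f y = - total_rate \<Gamma> y * f y + ?S" by (simp add: Gdiag)
  show ?thesis using 1 2 g0 by (simp add: field_simps)
qed

definition h :: "'a \<Rightarrow> real" where "h y = Gr (f y)"

lemma h_nonneg: "0 \<le> h y" unfolding h_def by (rule Gr_nonneg)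

lemma g1: "0 < g 1" by (rule g_pos) simp

lemma h_int: "integrable (K y) h"
proof (rule Bochner_Integration.integrable_bound)
  show "integrable (K y) (\<lambda>z. Gr 1 + (f z + 1) / g 1)"
    using f_int by (intro Bochner_Integration.integrable_add integrable_divide) auto
  show "h \<in> borel_measurable (measure_pmf (K y))" by simp
  show "AE z in K y. norm (h z) \<le> norm (Gr 1 + (f z + 1) / g 1)"
  proof (rule AE_I2)
    fix z
    have "h z \<le> Gr 1 + (f z - 1) / g 1" unfolding h_def
      by (rule G_concave) (use f_nonneg g1 in auto)
    also have "\<dots> \<le> Gr 1 + (f z + 1) / g 1" using g1 by (simp add: divide_right_mono)
    finally have "h z \<le> Gr 1 + (f z + 1) / g 1" .
    moreover have "0 \<le> Gr 1 + (f z + 1) / g 1" using g1 f_nonneg Gr_nonneg[of 1] by simp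
    ultimately show "norm (h z) \<le> norm (Gr 1 + (f z + 1) / g 1)" using h_nonneg[of z] by simp
  qed
qed

lemma h_drift: "(\<integral>z. h z \<partial>K y) \<le> h y + 1 / total_rate \<Gamma> y"
proof -
  have g0: "0 < total_rate \<Gamma> y" by (rule rate_pos)
  have dr: "gen_apply \<Gamma> f y \<le> g (f y)" using drift by blast
  show ?thesis
  proof (cases "0 < g (f y)")
    case True
    let ?r = "\<lambda>z. Gr (f y) + (f z - f y) / g (f y)"
    have ri: "integrable (K y) ?r"
      using f_int by (intro Bochner_Integration.integrable_add integrable_divide Bochner_Integration.integrable_diff) auto
    have "(\<integral>z. h z \<partial>K y) \<le> (\<integral>z. ?r z \<partial>K y)"
    proof (rule integral_mono[OF h_int ri])
      fix z show "h z \<le> ?r z" unfolding h_def by (rule G_concave) (use f_nonneg True in auto)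
    qed
    also have "(\<integral>z. ?r z \<partial>K y) = Gr (f y) + ((\<integral>z. f z \<partial>K y) - f y) / g (f y)"
      using f_int by (simp add: Bochner_Integration.integral_diff Bochner_Integration.integral_add diff_divide_distrib)
    also have "\<dots> = h y + (gen_apply \<Gamma> f y / total_rate \<Gamma> y) / g (f y)"
      by (simp add: f_integral h_def)
    also have "\<dots> \<le> h y + (g (f y) / total_rate \<Gamma> y) / g (f y)"
      using dr g0 True by (intro add_left_mono divide_right_mono) auto
    also have "\<dots> = h y + 1 / total_rate \<Gamma> y" using True by simp
    finally show ?thesis .
  next
    case False
    have fy: "f y = 0"
    proof (rule ccontr)
      assume "f y \<noteq> 0"
      then have "0 < f y" using f_nonneg by (metis order_le_neq_trans)
      then show False using g_pos False by blast
    qed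
    have "(\<integral>z. f z \<partial>K y) \<le> 0"
      using f_integral[of y] fy dr False g0 by (simp add: divide_nonpos_pos)
    moreover have "0 \<le> (\<integral>z. f z \<partial>K y)" using f_nonneg by (simp add: integral_nonneg_AE)
    ultimately have "(\<integral>z. f z \<partial>K y) = 0" by simp
    then have "AE z in K y. f z = 0"
      using integral_nonneg_eq_0_iff_AE[OF f_int] f_nonneg by simp
    then have ae: "AE z in K y. h z = h y" by eventually_elim (simp add: h_def fy)
    have "(\<integral>z. h z \<partial>K y) = (\<integral>z. h y \<partial>K y)" by (rule integral_cong_AE) (simp_all add: ae)
    then show ?thesis using g0 by simp
  qed
qed

lemma h_fin: "finite {y. h y \<le> C}"
proof -
  define C' where "C' = max C 0"
  have "(G \<longlongrightarrow> \<infinity>) at_top" using G_lim unfolding G_def[abs_def] .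
  then have "eventually (\<lambda>z. ennreal C' < G z) at_top"
    by (rule order_tendstoD(1)) simp
  then obtain Z where Z: "\<And>z. Z \<le> z \<Longrightarrow> ennreal C' < G z"
    unfolding eventually_at_top_linorder by blast
  define N where "N = nat \<lceil>max Z 0\<rceil>"
  have "{y. h y \<le> C} \<subseteq> {y. f y \<le> real N}"
  proof
    fix y assume y: "y \<in> {y. h y \<le> C}"
    show "y \<in> {y. f y \<le> real N}"
    proof (rule ccontr)
      assume "y \<notin> {y. f y \<le> real N}"
      then have "real N < f y" by simp
      moreover have "Z \<le> real N" unfolding N_def by linarith
      ultimately have "ennreal C' < G (f y)" using Z by simp
      also have "G (f y) = ennreal (h y)" unfolding h_def using f_nonneg by (simp add: G_fin')
      also have "\<dots> \<le> ennreal C'" using y unfolding C'_def by (simp add: ennreal_leI)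
      finally show False by simp
    qed
  qed
  moreover have "finite {y. f y \<le> real N}" using f_inf unfolding tends_to_infinity_def by blast
  ultimately show ?thesis by (rule finite_subset)
qed

end

context mainl begin

definition TT :: "'a \<Rightarrow> real" where "TT y = min 1 (1 / total_rate \<Gamma> y)"
definition psi :: "'a \<Rightarrow> real" where "psi y = (1 - exp (- TT y)) * exp (- total_rate \<Gamma> y * TT y)"

lemma TT_pos: "0 < TT y" "TT y \<le> 1"
  using rate_pos[of y] unfolding TT_def by auto

lemma psi_01: "0 \<le> psi y \<and> psi y \<le> 1"
proof -
  have "0 \<le> 1 - exp (- TT y)" "1 - exp (- TT y) \<le> 1" using TT_pos[of y] by auto
  moreover have "0 \<le> exp (- total_rate \<Gamma> y * TT y)" "exp (- total_rate \<Gamma> y * TT y) \<le> 1"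
    using TT_pos[of y] rate_pos[of y] by auto
  ultimately show ?thesis unfolding psi_def by (auto intro: mult_le_one)
qed

lemma psi_lower: "exp (-2) * TT y \<le> psi y"
proof -
  let ?t = "TT y" and ?g = "total_rate \<Gamma> y"
  have t: "0 < ?t" "?t \<le> 1" by (rule TT_pos)+
  have g: "0 < ?g" by (rule rate_pos)
  have gt: "?g * ?t \<le> 1"
  proof -
    have "?g * ?t \<le> ?g * (1 / ?g)" unfolding TT_def using g by (intro mult_left_mono) auto
    then show ?thesis using g by simp
  qed
  have e1: "exp (-1) \<le> exp (- ?g * ?t)" using gt by simp
  have "1 + ?t \<le> exp ?t" by (rule exp_ge_add_one_self)
  then have "exp (- ?t) * (1 + ?t) \<le> exp (- ?t) * exp ?t" by (intro mult_left_mono) auto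
  then have "exp (- ?t) + ?t * exp (- ?t) \<le> 1" by (simp add: exp_minus field_simps)
  then have a: "?t * exp (- ?t) \<le> 1 - exp (- ?t)" by simp
  have "?t * exp (-1) \<le> ?t * exp (- ?t)" using t by (intro mult_left_mono) auto
  with a have b: "?t * exp (-1) \<le> 1 - exp (- ?t)" by linarith
  have mm: "?t * exp (-1) * exp (-1) \<le> (1 - exp (- ?t)) * exp (- ?g * ?t)"
    using b e1 t by (intro mult_mono) auto
  have "exp (-2::real) = exp (-1) * exp (-1)" by (simp add: exp_add[symmetric])
  then have e2: "exp (-2) * ?t = ?t * exp (-1) * exp (-1)" by simp
  show ?thesis unfolding psi_def e2 by (rule mm)
qed

lemma psi_c: "exp (-2) \<le> psi y \<or> exp (-2) * (1 / total_rate \<Gamma> y) \<le> psi y"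
proof (cases "1 \<le> total_rate \<Gamma> y")
  case True
  then have "TT y = 1 / total_rate \<Gamma> y" unfolding TT_def by auto
  then show ?thesis using psi_lower[of y] by simp
next
  case False
  then have "TT y = 1" unfolding TT_def using rate_pos[of y] by (auto simp: min_def field_simps)
  then show ?thesis using psi_lower[of y] by simp
qed

lemma main_lim:
  "(\<lambda>n. uu (\<lambda>y. 1 - (1 - exp (- TT y)) * exp (- total_rate \<Gamma> y * TT y)) n x) \<longlonglongrightarrow> 0"
proof -
  let ?\<phi> = "\<lambda>y. 1 - (1 - exp (- TT y)) * exp (- total_rate \<Gamma> y * TT y)"
  have phi_eq: "?\<phi> y = 1 - psi y" for y unfolding psi_def by simp
  have p0: "\<And>y. 0 \<le> ?\<phi> y" and p1: "\<And>y. ?\<phi> y \<le> 1" using psi_01 unfolding phi_eq by auto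
  obtain v where lim: "\<And>y. (\<lambda>n. uu ?\<phi> n y) \<longlonglongrightarrow> v y" and v01: "\<And>y. 0 \<le> v y \<and> v y \<le> 1"
    and fp: "\<And>y. v y = ?\<phi> y * (\<integral>z. v z \<partial>K y)"
    using uu_lim[of ?\<phi>, OF p0 p1] by blast
  have "v x = 0"
  proof (rule maxp[where Kk=K and \<psi>=psi and b="\<lambda>y. 1 / total_rate \<Gamma> y" and c="exp (-2)" and h=h])
    show "\<And>y. 0 \<le> v y \<and> v y \<le> 1" by (rule v01)
    show "\<And>y. v y = (1 - psi y) * (\<integral>z. v z \<partial>K y)" using fp phi_eq by metis
    show "\<And>y. 0 \<le> psi y \<and> psi y \<le> 1" by (rule psi_01)
    show "0 < exp (-2::real)" by simp
    show "exp (-2::real) \<le> 1" by simp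
    show "\<And>y. exp (-2) \<le> psi y \<or> exp (-2) * (1 / total_rate \<Gamma> y) \<le> psi y" by (rule psi_c)
    show "\<And>y. 0 < 1 / total_rate \<Gamma> y" using rate_pos by simp
    show "\<And>y. 0 \<le> h y" by (rule h_nonneg)
    show "\<And>C. finite {y. h y \<le> C}" by (rule h_fin)
    show "\<And>y. integrable (K y) h" by (rule h_int)
    show "\<And>y. (\<integral>z. h z \<partial>K y) \<le> h y + 1 / total_rate \<Gamma> y" by (rule h_drift)
  qed
  then show ?thesis using lim[of x] by simp
qed

lemma TT_nonneg: "\<forall>y. 0 \<le> TT y" using TT_pos by (auto intro: less_imp_le)

end

theorem theorem1p5:
  fixes \<Gamma> :: "'a::countable \<Rightarrow> 'a \<Rightarrow> real"
    and f :: "'a \<Rightarrow> real"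
    and g :: "real \<Rightarrow> real"
  assumes X_inf: "infinite (UNIV :: 'a set)"
    and gen: "is_generator \<Gamma>"
    and irr: "jump_irreducible \<Gamma>"
    and f_dom: "in_Dom \<Gamma> f"
    and f_nonneg: "\<forall>x. 0 \<le> f x"
    and f_inf: "tends_to_infinity f"
    and g_mono: "mono_on {0..} g"
    and g_nonneg: "\<forall>y\<ge>0. 0 \<le> g y"
    and G_fin: "\<forall>z\<ge>0. set_nn_integral lborel {0..z} (\<lambda>y. inverse (ennreal (g y))) < \<infinity>"
    and G_lim: "((\<lambda>z. set_nn_integral lborel {0..z} (\<lambda>y. inverse (ennreal (g y)))) \<longlongrightarrow> \<infinity>) at_top"
    and drift: "\<forall>x. gen_apply \<Gamma> f x \<le> g (f x)"
  shows "\<forall>x (M :: 'w measure) \<xi> \<sigma>. ctmc_from \<Gamma> x M \<xi> \<sigma> \<longrightarrow>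
           measure M {\<omega> \<in> space M. explosion_time \<sigma> \<omega> = \<infinity>} = 1"
proof (intro allI impI)
  fix x :: 'a and M :: "'w measure" and \<xi> \<sigma>
  assume c: "ctmc_from \<Gamma> x M \<xi> \<sigma>"
  interpret m: mainl \<Gamma> g f
    by unfold_locales fact+
  interpret c: ctmcl \<Gamma> x M \<xi> \<sigma>
    by unfold_locales (rule c)
  have eq: "c.phi (\<lambda>y. 1 - exp (- m.TT y)) m.TT = (\<lambda>y. 1 - (1 - exp (- m.TT y)) * exp (- total_rate \<Gamma> y * m.TT y))"
    by (simp add: c.phi_def fun_eq_iff)
  show "measure M {\<omega> \<in> space M. explosion_time \<sigma> \<omega> = \<infinity>} = 1"
    by (rule c.final[OF m.TT_nonneg]) (simp only: eq m.main_lim)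
qed

end
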